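(* Let $\mathbf{k}$ be a field, $n\ge 1$, $N\ge 2$, and let $P_1,\dots,P_N\in\mathbf{k}^n$ be pairwise distinct points. In the point trie $T$ of the ordered list $[P_1,\dots,P_N]$, let $h\in\{1,\dots,n\}$ be the smallest level such that the node $v$ at level $h$ whose label contains $N$ has label exactly $\{N\}$. Then the parent of $v$ has at least one child other than $v$; let $w$ be the child of the parent of $v$ lying immediately to the left of $v$ (in the left-to-right order of children), and let $i_1$ be the smallest element of the label of $w$. Then: (1) $h$ equals the $\sigma$-value $\sigma(P_N,\{P_1,\dots,P_{N-1}\})$; (2) $P_{i_1}$ is the $\sigma$-antecedent of $P_N$, i.e. $i_1$ is the maximal index $m\in\{1,\dots,N-1\}$ such that $\pi_{h-1}(P_m)=\pi_{h-1}(P_N)$ and the exponents of $x_{h+1},\dots,x_n$ in the term $\Phi(P_m)$ are all zero, where $\Phi$ is the Cerlienco–Mureddu correspondence of $[P_1,\dots,P_{N-1}]$.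
   Context: Write $P_i=(a_{1,i},\dots,a_{n,i})$. For $0\le m\le n$, $\pi_m:\mathbf{k}^n\to\mathbf{k}^m$ is the projection onto the first $m$ coordinates ($\pi_0$ maps everything to the empty tuple), and for terms $\pi^m(x_1^{\gamma_1}\cdots x_n^{\gamma_n})$ denotes the exponent tuple $(\gamma_m,\dots,\gamma_n)$. Terms are monomials in $\mathbf{k}[x_1,\dots,x_n]$, ordered lexicographically with $x_1<\dots<x_n$. Point trie of an ordered list $[P_1,\dots,P_N]$ of distinct points: a rooted tree with levels $0,\dots,n$. For each $j$ and each value $c\in\pi_j(\{P_1,\dots,P_N\})$ there is exactly one node at level $j$, whose label is the set $\{i:\pi_j(P_i)=c\}$ (so the root has label $\{1,\dots,N\}$ and each leaf has a singleton label). A node at level $j\ge1$ with value $c$ is a child of the node at level $j-1$ with value obtained by dropping the last coordinate of $c$, and the edge between them is labelled by that last coordinate. The children of each node are ordered from left to right by increasing smallest element of their labels (equivalently, in the order in which they are created when the points are inserted one by one in the order $P_1,P_2,\dots$). $\sigma$-value: for a finite set $\mathbf{X}$ of points and $P\notin\mathbf{X}$, $\sigma(P,\mathbf{X})$ is the maximal $s\in\{1,\dots,n\}$ such that some $Q\in\mathbf{X}$ satisfies $\pi_{s-1}(Q)=\pi_{s-1}(P)$. Cerlienco–Mureddu correspondence $\Phi$ of an ordered list $[P_1,\dots,P_M]$ of distinct points of $\mathbf{k}^n$ (defined recursively on $M$ and on $n$; write $\Phi(P_i)=x_1^{\alpha^{(i)}_1}\cdots x_n^{\alpha^{(i)}_n}$):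 $\Phi(P_1)=1$. For $M>1$, assuming $\alpha^{(1)},\dots,\alpha^{(M-1)}$ known (these are the values of the correspondence of $[P_1,\dots,P_{M-1}]$), let $s=\sigma(P_M,\{P_1,\dots,P_{M-1}\})$; let the $\sigma$-antecedent $P_l$ be the point with maximal index $l\le M-1$ such that $\pi_{s-1}(P_l)=\pi_{s-1}(P_M)$ and $\alpha^{(l)}_{s+1}=\dots=\alpha^{(l)}_n=0$. Set $\alpha^{(M)}_j=0$ for $j>s$ and $\alpha^{(M)}_s=\alpha^{(l)}_s+1$. Then let $Y$ be the ordered list (in the order of indices) of the projections $\pi_{s-1}(P_i)$ of the points $P_i$, $1\le i\le M$, with $(\alpha^{(i)}_s,\dots,\alpha^{(i)}_n)=(\alpha^{(M)}_s,0,\dots,0)$; apply the Cerlienco–Mureddu correspondence in $\mathbf{k}^{s-1}$ to $Y$ and set $(\alpha^{(M)}_1,\dots,\alpha^{(M)}_{s-1})$ equal to the exponent vector of its value at $\pi_{s-1}(P_M)$. The image of $\Phi$ is the lexicographic Gröbner escalier of the vanishing ideal of the points. *)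

theory Defs
  imports Main
begin

text \<open>Points of k^n are lists of length n over a field 'a.  The projection pi_j is take j.
  Terms x_1^g1 ... x_n^gn are represented by their exponent vectors (nat lists of length n);
  the exponent of x_j is at list position j-1.\<close>

definition sigma_val :: "nat \<Rightarrow> 'a list \<Rightarrow> 'a list set \<Rightarrow> nat" where
  "sigma_val n p X = Max {s \<in> {1..n}. \<exists>q\<in>X. take (s - 1) q = take (s - 1) p}"

text \<open>Cerlienco--Mureddu correspondence of an ordered list of points of k^n:
  returns the list of exponent vectors of the terms Phi(P_1), ..., Phi(P_M).\<close>

function cm :: "nat \<Rightarrow> 'a list list \<Rightarrow> nat list list" where
  "cm n ps =
    (if length ps \<le> 1 then map (\<lambda>_. replicate n 0) ps
     else
       (let qs = butlast ps; p = last ps; M = length ps;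
            s = sigma_val n p (set qs)
        in if s < 1 \<or> n < s then []
           else
             (let A = cm n qs;
                  l = (GREATEST l. l < length qs \<and> take (s - 1) (qs ! l) = take (s - 1) p \<and>
                          (\<forall>j. s < j \<and> j \<le> n \<longrightarrow> A ! l ! (j - 1) = 0));
                  a = A ! l ! (s - 1) + 1;
                  Y = [take (s - 1) (ps ! i). i \<leftarrow> [0..<M],
                         i = M - 1 \<or> drop (s - 1) (A ! i) = a # replicate (n - s) 0];
                  B = cm (s - 1) Y
              in A @ [last B @ [a] @ replicate (n - s) 0])))"
  by pat_completeness auto
termination
  by (relation "measures [\<lambda>(n, ps). n, \<lambda>(n, ps). length ps]") auto

text \<open>Point trie of the ordered list [P 1, ..., P N]: the node at level j with value c
  (c in pi_j of the points) is identified with the pair (j, c).\<close>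

definition trie_nodes :: "(nat \<Rightarrow> 'a list) \<Rightarrow> nat \<Rightarrow> nat \<Rightarrow> 'a list set" where
  "trie_nodes P N j = (\<lambda>i. take j (P i)) ` {1..N}"

definition trie_label :: "(nat \<Rightarrow> 'a list) \<Rightarrow> nat \<Rightarrow> nat \<Rightarrow> 'a list \<Rightarrow> nat set" where
  "trie_label P N j c = {i \<in> {1..N}. take j (P i) = c}"

definition trie_children :: "(nat \<Rightarrow> 'a list) \<Rightarrow> nat \<Rightarrow> nat \<Rightarrow> 'a list \<Rightarrow> 'a list set" where
  "trie_children P N j c = {c' \<in> trie_nodes P N (Suc j). butlast c' = c}"

text \<open>left-to-right order of children: by increasing smallest element of the label\<close>
definition trie_key :: "(nat \<Rightarrow> 'a list) \<Rightarrow> nat \<Rightarrow> nat \<Rightarrow> 'a list \<Rightarrow> nat" where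
  "trie_key P N j c = Min (trie_label P N j c)"

definition trie_left_neighbor ::
    "(nat \<Rightarrow> 'a list) \<Rightarrow> nat \<Rightarrow> nat \<Rightarrow> 'a list \<Rightarrow> 'a list \<Rightarrow> 'a list \<Rightarrow> bool" where
  "trie_left_neighbor P N j c w v \<longleftrightarrow>
     w \<in> trie_children P N j c \<and> v \<in> trie_children P N j c \<and>
     trie_key P N (Suc j) w < trie_key P N (Suc j) v \<and>
     \<not> (\<exists>u \<in> trie_children P N j c.
          trie_key P N (Suc j) w < trie_key P N (Suc j) u \<and>
          trie_key P N (Suc j) u < trie_key P N (Suc j) v)"

end

theory Submission
  imports Defs
begin

declare cm.simps[simp del]

lemma sigma_props:
  fixes p :: "'a list"
  assumes "1 \<le> n" "finite X" "X \<noteq> {}"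
  defines "s \<equiv> sigma_val n p X"
  shows "1 \<le> s" "s \<le> n" "\<exists>q\<in>X. take (s - 1) q = take (s - 1) p"
    "\<And>s'. s' \<in> {1..n} \<Longrightarrow> \<exists>q\<in>X. take (s' - 1) q = take (s' - 1) p \<Longrightarrow> s' \<le> s"
proof -
  let ?S = "{s \<in> {1..n}. \<exists>q\<in>X. take (s - 1) q = take (s - 1) p}"
  have fin: "finite ?S" by simp
  have one: "1 \<in> ?S" using assms by auto
  have ne: "?S \<noteq> {}" using one by blast
  have mem: "s \<in> ?S" unfolding s_def sigma_val_def using Max_in[OF fin ne] .
  then show "1 \<le> s" "s \<le> n" "\<exists>q\<in>X. take (s - 1) q = take (s - 1) p" by auto
  show "\<And>s'. s' \<in> {1..n} \<Longrightarrow> \<exists>q\<in>X. take (s' - 1) q = take (s' - 1) p \<Longrightarrow> s' \<le> s"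
    unfolding s_def sigma_val_def using Max_ge[OF fin] by blast
qed

lemma cm_step:
  assumes "2 \<le> length ps" "1 \<le> n"
  and qs_def: "qs = butlast ps" and p_def: "p = last ps" and s_def: "s = sigma_val n p (set qs)"
  and A_def: "A = cm n qs"
  and l_def: "l = (GREATEST l. l < length qs \<and> take (s - 1) (qs ! l) = take (s - 1) p \<and>
                          (\<forall>j. s < j \<and> j \<le> n \<longrightarrow> A ! l ! (j - 1) = 0))"
  and a_def: "a = A ! l ! (s - 1) + 1"
  and Y_def: "Y = map (\<lambda>i. take (s - 1) (ps ! i)) (filter (\<lambda>i. i = length ps - 1 \<or> drop (s - 1) (A ! i) = a # replicate (n - s) 0) [0..<length ps])"
  and B_def: "B = cm (s - 1) Y"
  shows "cm n ps = A @ [last B @ [a] @ replicate (n - s) 0]" "1 \<le> s" "s \<le> n"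
proof -
  have ne: "set qs \<noteq> {}" using assms(1) unfolding qs_def by (cases ps rule: rev_cases) auto
  show s1: "1 \<le> s" and s2: "s \<le> n" unfolding s_def using sigma_props[OF assms(2) _ ne] by auto
  have cc: "\<And>f P (M::nat). concat (map (\<lambda>i. if P i then [f i] else []) [0..<M]) = map f (filter P [0..<M])"
    by (induct_tac M) auto
  have l1: "\<not> length ps \<le> 1" using assms(1) by simp
  have l2: "\<not> (s < 1 \<or> n < s)" using s1 s2 by simp
  show "cm n ps = A @ [last B @ [a] @ replicate (n - s) 0]"
    apply (subst cm.simps)
    apply (simp only: Let_def l1 if_False)
    apply (simp only: qs_def[symmetric] p_def[symmetric] s_def[symmetric] l2 if_False)
    apply (simp only: A_def[symmetric] l_def[symmetric])
    apply (simp only: a_def[symmetric] cc)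
    apply (simp only: Y_def[symmetric] B_def[symmetric])
    done
qed


definition incz :: "nat \<Rightarrow> nat list list \<Rightarrow> bool" where
 "incz n V \<longleftrightarrow> (\<forall>i k. i < k \<and> k < length V \<and> (\<forall>j. 1<j \<and> j\<le>n \<longrightarrow> V!i!(j-1) = 0)
     \<and> (\<forall>j. 1<j \<and> j\<le>n \<longrightarrow> V!k!(j-1)=0) \<longrightarrow> V!i!0 < V!k!0)"

lemma cm_Nil: "cm n [] = []"
  by (subst cm.simps) simp

lemma cm_single: "cm n [p] = [replicate n 0]"
  by (subst cm.simps) simp

lemma cm_L:
  "1 \<le> n \<or> length ps \<le> 1 \<Longrightarrow> length (cm n ps) = length ps \<and> (\<forall>v\<in>set (cm n ps). length v = n) \<and> incz n (cm n ps)"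
proof (induction n arbitrary: ps rule: less_induct)
  case (less n)
  show ?case using less.prems
  proof (induction ps rule: rev_induct)
    case Nil
    then show ?case by (simp add: cm_Nil incz_def)
  next
    case (snoc p qs)
    show ?case
    proof (cases "qs = []")
      case True
      then show ?thesis by (simp add: cm_single incz_def)
    next
      case False
      define ps where "ps = qs @ [p]"
      have len: "2 \<le> length ps" using False ps_def by (cases qs) auto
      have n1: "1 \<le> n" using snoc.prems len ps_def by auto
      define s where "s = sigma_val n p (set qs)"
      define A where "A = cm n qs"
      define l where "l = (GREATEST l. l < length qs \<and> take (s - 1) (qs ! l) = take (s - 1) p \<and>
                          (\<forall>j. s < j \<and> j \<le> n \<longrightarrow> A ! l ! (j - 1) = 0))"
      define a where "a = A ! l ! (s - 1) + 1"
      define Y where "Y = map (\<lambda>i. take (s - 1) (ps ! i)) (filter (\<lambda>i. i = length ps - 1 \<or> drop (s - 1) (A ! i) = a # replicate (n - s) 0) [0..<length ps])"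
      define B where "B = cm (s - 1) Y"
      have st: "cm n ps = A @ [last B @ [a] @ replicate (n - s) 0]" "1 \<le> s" "s \<le> n"
      proof -
        have bq: "qs = butlast ps" and lq: "p = last ps" unfolding ps_def by simp_all
        show "cm n ps = A @ [last B @ [a] @ replicate (n - s) 0]" "1 \<le> s" "s \<le> n"
          using cm_step[OF len n1 bq lq s_def A_def l_def a_def Y_def B_def] by blast+
      qed
      have IHA: "length A = length qs" "\<forall>v\<in>set A. length v = n" "incz n A"
        using snoc.IH n1 A_def by auto
      have lp: "length ps = Suc (length qs)" using ps_def by simp
      have Yne: "Y \<noteq> []" unfolding Y_def using lp by (auto simp: filter_empty_conv)
      show ?thesis
      proof (cases "s = 1")
        case False
        then have s2: "2 \<le> s" using st by simp
        have "length B = length Y \<and> (\<forall>v\<in>set B. length v = s - 1)"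
        proof -
          have "s - 1 < n" "1 \<le> s - 1" using st s2 by auto
          then show ?thesis using less.IH[of "s - 1" Y] B_def by blast
        qed
        then have lB: "length (last B) = s - 1" using Yne by (metis last_in_set length_0_conv)
        define v where "v = last B @ [a] @ replicate (n - s) 0"
        have lv: "length v = n" using lB st v_def by simp
        have va: "v ! (s - 1) = a" using lB v_def by (simp add: nth_append)
        have vnz: "\<not> (\<forall>j. 1<j \<and> j\<le>n \<longrightarrow> v!(j-1)=0)"
        proof
          assume "\<forall>j. 1<j \<and> j\<le>n \<longrightarrow> v!(j-1)=0"
          then have "v!(s-1) = 0" using s2 st(3) by auto
          then show False using va a_def by simp
        qed
        have "incz n (A @ [v])"
          unfolding incz_def
        proof (intro allI impI)
          fix i k assume H: "i < k \<and> k < length (A @ [v]) \<and> (\<forall>j. 1 < j \<and> j \<le> n \<longrightarrow> (A @ [v]) ! i ! (j - 1) = 0) \<and>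
           (\<forall>j. 1 < j \<and> j \<le> n \<longrightarrow> (A @ [v]) ! k ! (j - 1) = 0)"
          show "(A @ [v]) ! i ! 0 < (A @ [v]) ! k ! 0"
          proof (cases "k < length A")
            case True
            have ik: "i < length A" using H True by simp
            have e1: "(A @ [v]) ! i = A ! i" using ik by (simp add: nth_append)
            have e2: "(A @ [v]) ! k = A ! k" using True by (simp add: nth_append)
            show ?thesis using IHA(3) H[unfolded e1 e2] True unfolding incz_def e1 e2 by blast
          next
            case False
            then have "k = length A" using H by simp
            then show ?thesis using H vnz by simp
          qed
        qed
        then show ?thesis using st lv IHA ps_def v_def by auto
      next
        case True
        have key: "\<And>i. i < length qs \<Longrightarrow> (\<forall>j. 1<j \<and> j\<le>n \<longrightarrow> A!i!(j-1) = 0) \<Longrightarrow> A!i!0 < a"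
        proof -
          fix i assume i: "i < length qs" and z: "\<forall>j. 1<j \<and> j\<le>n \<longrightarrow> A!i!(j-1) = 0"
          let ?Q = "\<lambda>l. l < length qs \<and> take (s - 1) (qs ! l) = take (s - 1) p \<and>
                          (\<forall>j. s < j \<and> j \<le> n \<longrightarrow> A ! l ! (j - 1) = 0)"
          have Qi: "?Q i" using i z True by simp
          have bnd: "\<forall>y. ?Q y \<longrightarrow> y \<le> length qs" by auto
          have Ql: "?Q l" unfolding l_def using GreatestI_nat[of ?Q i "length qs"] Qi bnd by blast
          have il: "i \<le> l" unfolding l_def using Greatest_le_nat[of ?Q i "length qs"] Qi bnd by blast
          show "A!i!0 < a"
          proof (cases "i = l")
            case True then show ?thesis using a_def \<open>s = 1\<close> by simp
          next
            case False
            then have "A!i!0 < A!l!0" using IHA il Ql z True i unfolding incz_def by auto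
            then show ?thesis using a_def \<open>s = 1\<close> by simp
          qed
        qed
        have filt: "filter (\<lambda>i. i = length ps - 1 \<or> drop (s - 1) (A ! i) = a # replicate (n - s) 0) [0..<length ps]
            = [length qs]"
        proof -
          have "filter (\<lambda>i. i = length ps - 1 \<or> drop (s - 1) (A ! i) = a # replicate (n - s) 0) [0..<length qs] = []"
          proof (rule filter_False, intro ballI notI)
            fix i assume i: "i \<in> set [0..<length qs]" and d: "i = length ps - 1 \<or> drop (s - 1) (A ! i) = a # replicate (n - s) 0"
            then have eq: "A ! i = a # replicate (n - 1) 0" using lp True by auto
            have "\<forall>j. 1<j \<and> j\<le>n \<longrightarrow> A!i!(j-1) = 0"
              using eq by (auto simp: nth_Cons split: nat.split)
            then have "A!i!0 < a" using key i by simp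
            then show False using eq by simp
          qed
          then show ?thesis using lp by simp
        qed
        have Yv: "Y = [[]]" unfolding Y_def filt using True by simp
        have lB: "last B = []" unfolding B_def Yv using True by (simp add: cm_single)
        define v where "v = last B @ [a] @ replicate (n - s) 0"
        have lv: "length v = n" using lB st v_def True n1 by simp
        have va: "v ! 0 = a" using lB v_def by simp
        have "incz n (A @ [v])"
          unfolding incz_def
        proof (intro allI impI)
          fix i k assume H: "i < k \<and> k < length (A @ [v]) \<and> (\<forall>j. 1 < j \<and> j \<le> n \<longrightarrow> (A @ [v]) ! i ! (j - 1) = 0) \<and>
           (\<forall>j. 1 < j \<and> j \<le> n \<longrightarrow> (A @ [v]) ! k ! (j - 1) = 0)"
          show "(A @ [v]) ! i ! 0 < (A @ [v]) ! k ! 0"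
          proof (cases "k < length A")
            case True
            have ik: "i < length A" using H True by simp
            have e1: "(A @ [v]) ! i = A ! i" using ik by (simp add: nth_append)
            have e2: "(A @ [v]) ! k = A ! k" using True by (simp add: nth_append)
            show ?thesis using IHA(3) H[unfolded e1 e2] True unfolding incz_def e1 e2 by blast
          next
            case False
            then have k: "k = length A" using H by simp
            then have "i < length qs" using H IHA by simp
            moreover have "\<forall>j. 1<j \<and> j\<le>n \<longrightarrow> A!i!(j-1) = 0" using H k by (auto simp: nth_append)
            ultimately show ?thesis using key k va H by (auto simp: nth_append)
          qed
        qed
        then show ?thesis using st lv IHA ps_def v_def by auto
      qed
    qed
  qed
qed

lemma cm_F:
  assumes "distinct ps" "\<forall>x\<in>set ps. length x = n" "1 \<le> n" "i < length ps" "t \<le> n"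
  shows "(\<forall>j. t<j \<and> j\<le>n \<longrightarrow> cm n ps ! i ! (j-1) = 0) \<longleftrightarrow> (\<forall>k<i. take t (ps!k) \<noteq> take t (ps!i))"
  using assms
proof (induction ps arbitrary: i rule: rev_induct)
  case Nil
  then show ?case by simp
next
  case (snoc p qs)
  show ?case
  proof (cases "qs = []")
    case True
    then have i0: "i = 0" using snoc.prems by simp
    show ?thesis using True i0 by (auto simp: cm_single)
  next
    case False
    define ps where "ps = qs @ [p]"
    have len: "2 \<le> length ps" using False ps_def by (cases qs) auto
    have n1: "1 \<le> n" using snoc.prems by auto
    define s where "s = sigma_val n p (set qs)"
    define A where "A = cm n qs"
    define l where "l = (GREATEST l. l < length qs \<and> take (s - 1) (qs ! l) = take (s - 1) p \<and>
                          (\<forall>j. s < j \<and> j \<le> n \<longrightarrow> A ! l ! (j - 1) = 0))"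
    define a where "a = A ! l ! (s - 1) + 1"
    define Y where "Y = map (\<lambda>i. take (s - 1) (ps ! i)) (filter (\<lambda>i. i = length ps - 1 \<or> drop (s - 1) (A ! i) = a # replicate (n - s) 0) [0..<length ps])"
    define B where "B = cm (s - 1) Y"
    have st: "cm n ps = A @ [last B @ [a] @ replicate (n - s) 0]" "1 \<le> s" "s \<le> n"
    proof -
      have bq: "qs = butlast ps" and lq: "p = last ps" unfolding ps_def by simp_all
      show "cm n ps = A @ [last B @ [a] @ replicate (n - s) 0]" "1 \<le> s" "s \<le> n"
        using cm_step[OF len n1 bq lq s_def A_def l_def a_def Y_def B_def] by blast+
    qed
    have LA: "length A = length qs" using cm_L[of n qs] n1 A_def by blast
    have LV: "\<forall>v\<in>set (cm n ps). length v = n" using cm_L[of n ps] n1 by blast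
    show ?thesis
    proof (cases "i < length qs")
      case True
      have e1: "cm n (qs @ [p]) ! i = A ! i" using st(1) True LA ps_def by (simp add: nth_append)
      have e2: "\<And>k. k \<le> i \<Longrightarrow> (qs @ [p]) ! k = qs ! k" using True by (simp add: nth_append)
      have IH: "(\<forall>j. t<j \<and> j\<le>n \<longrightarrow> cm n qs ! i ! (j-1) = 0) \<longleftrightarrow> (\<forall>k<i. take t (qs!k) \<noteq> take t (qs!i))"
        using snoc.IH[of i] snoc.prems True by auto
      have e3: "(\<forall>k<i. take t ((qs @ [p])!k) \<noteq> take t ((qs @ [p])!i)) \<longleftrightarrow> (\<forall>k<i. take t (qs!k) \<noteq> take t (qs!i))"
        using True by (simp add: nth_append)
      show ?thesis unfolding e1 A_def e3 by (rule IH)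
    next
      case False
      then have iq: "i = length qs" using snoc.prems by simp
      define v where "v = last B @ [a] @ replicate (n - s) 0"
      have vi: "cm n (qs @ [p]) ! i = v" using st(1) iq LA ps_def v_def by (simp add: nth_append)
      have "v \<in> set (cm n ps)" using st(1) v_def by simp
      then have lv: "length v = n" using LV by blast
      then have lB: "length (last B) = s - 1" using v_def st by simp
      have LHS: "(\<forall>j. t<j \<and> j\<le>n \<longrightarrow> v ! (j-1) = 0) \<longleftrightarrow> s \<le> t"
      proof
        assume H: "\<forall>j. t<j \<and> j\<le>n \<longrightarrow> v ! (j-1) = 0"
        show "s \<le> t"
        proof (rule ccontr)
          assume "\<not> s \<le> t"
          then have "v ! (s - 1) = 0" using H st by auto
          moreover have "v ! (s - 1) = a" using lB v_def by (simp add: nth_append)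
          ultimately show False using a_def by simp
        qed
      next
        assume st2: "s \<le> t"
        show "\<forall>j. t<j \<and> j\<le>n \<longrightarrow> v ! (j-1) = 0"
        proof (intro allI impI)
          fix j assume j: "t < j \<and> j \<le> n"
          have ge: "length (last B) \<le> j - 1" using lB j st2 by arith
          have "v ! (j - 1) = ([a] @ replicate (n - s) 0) ! (j - 1 - (s - 1))"
            unfolding v_def using ge lB by (simp add: nth_append del: append.simps)
          also have "\<dots> = 0" using j st2 st by (auto simp: nth_Cons split: nat.split)
          finally show "v ! (j - 1) = 0" .
        qed
      qed
      have pi: "(qs @ [p]) ! i = p" using iq by simp
      have dq: "distinct (qs @ [p])" "\<forall>x\<in>set (qs @ [p]). length x = n" using snoc.prems by auto
      have sp: "\<exists>q\<in>set qs. take (s - 1) q = take (s - 1) p"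
        "\<And>s'. s' \<in> {1..n} \<Longrightarrow> \<exists>q\<in>set qs. take (s' - 1) q = take (s' - 1) p \<Longrightarrow> s' \<le> s"
        using sigma_props[OF n1, where X="set qs" and p=p] \<open>qs \<noteq> []\<close> s_def by auto
      have RHS: "(\<forall>k<i. take t ((qs @ [p])!k) \<noteq> take t p) \<longleftrightarrow> s \<le> t"
      proof
        assume H: "\<forall>k<i. take t ((qs @ [p])!k) \<noteq> take t p"
        show "s \<le> t"
        proof (rule ccontr)
          assume "\<not> s \<le> t"
          obtain q where q: "q \<in> set qs" "take (s - 1) q = take (s - 1) p" using sp(1) by blast
          obtain k where k: "k < length qs" "qs ! k = q" using q(1) by (metis in_set_conv_nth)
          have mt: "min t (s - 1) = t" using \<open>\<not> s \<le> t\<close> by simp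
          from q(2) have "take t (take (s - 1) q) = take t (take (s - 1) p)" by simp
          then have "take t q = take t p" using mt by (simp add: take_take)
          moreover have "take t (qs!k) \<noteq> take t p" using H k iq by (auto simp: nth_append)
          ultimately show False using k(2) by simp
        qed
      next
        assume st2: "s \<le> t"
        show "\<forall>k<i. take t ((qs @ [p])!k) \<noteq> take t p"
        proof (intro allI impI notI)
          fix k assume k: "k < i" and eq: "take t ((qs @ [p])!k) = take t p"
          have qk: "(qs @ [p])!k = qs ! k" using k iq by (simp add: nth_append)
          show False
          proof (cases "t < n")
            case True
            have kq: "k < length qs" using k iq by simp
            have "\<exists>q\<in>set qs. take (Suc t - 1) q = take (Suc t - 1) p"
              using eq qk kq nth_mem[OF kq] by auto
            moreover have "Suc t \<in> {1..n}" using True by simp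
            ultimately have "Suc t \<le> s" using sp(2) by blast
            then show False using st2 by simp
          next
            case False
            then have tn: "t = n" using snoc.prems by simp
            have kq: "k < length qs" using k iq by simp
            have m: "qs ! k \<in> set qs" using nth_mem[OF kq] .
            have "length (qs ! k) = n" "length p = n" using dq(2) m by auto
            then have "qs ! k = p" using eq qk tn by simp
            then show False using dq(1) m by simp
          qed
        qed
      qed
      show ?thesis unfolding vi pi using LHS RHS by simp
    qed
  qed
qed

theorem mainTheorem1:
  fixes P :: "nat \<Rightarrow> 'a::field list" and n N h :: nat
  assumes "n \<ge> 1" and "N \<ge> 2"
    and "\<forall>i \<in> {1..N}. length (P i) = n"
    and "inj_on P {1..N}"
    and "h = (LEAST h. h \<in> {1..n} \<and> trie_label P N h (take h (P N)) = {N})"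
  shows "(\<exists>c \<in> trie_children P N (h - 1) (take (h - 1) (P N)). c \<noteq> take h (P N))
    \<and> h = sigma_val n (P N) (P ` {1..N - 1})
    \<and> (\<exists>w. trie_left_neighbor P N (h - 1) (take (h - 1) (P N)) w (take h (P N)))
    \<and> (\<forall>w. trie_left_neighbor P N (h - 1) (take (h - 1) (P N)) w (take h (P N)) \<longrightarrow>
         (let i\<^sub>1 = Min (trie_label P N h w);
              Phi = cm n (map P [1..<N])
          in i\<^sub>1 \<in> {1..N - 1} \<and> take (h - 1) (P i\<^sub>1) = take (h - 1) (P N)
             \<and> (\<forall>j \<in> {h + 1..n}. Phi ! (i\<^sub>1 - 1) ! (j - 1) = 0)
             \<and> (\<forall>m \<in> {1..N - 1}. take (h - 1) (P m) = take (h - 1) (P N)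
                   \<and> (\<forall>j \<in> {h + 1..n}. Phi ! (m - 1) ! (j - 1) = 0) \<longrightarrow> m \<le> i\<^sub>1)))"
proof -
  note n1 = assms(1) and N2 = assms(2) and lenP = assms(3) and injP = assms(4)
  define Qh where "Qh = (\<lambda>h. h \<in> {1..n} \<and> trie_label P N h (take h (P N)) = {N})"
  have hdef: "h = (LEAST h. Qh h)" using assms(5) Qh_def by simp
  have Qn: "Qh n"
  proof -
    have "trie_label P N n (take n (P N)) = {N}"
    proof
      show "trie_label P N n (take n (P N)) \<subseteq> {N}"
      proof
        fix i assume "i \<in> trie_label P N n (take n (P N))"
        then have i: "i \<in> {1..N}" "take n (P i) = take n (P N)" unfolding trie_label_def by auto
        have l1: "length (P i) = n" using lenP i(1) by blast
        have NN: "N \<in> {1..N}" using N2 by simp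
        have l2: "length (P N) = n" using lenP NN by blast
        have t1: "take n (P i) = P i" using l1 by (metis order_refl take_all)
        have t2: "take n (P N) = P N" using l2 by (metis order_refl take_all)
        have "P i = P N" using i(2) t1 t2 by simp
        then have "i = N" using inj_onD[OF injP _ i(1) NN] by blast
        then show "i \<in> {N}" by simp
      qed
      show "{N} \<subseteq> trie_label P N n (take n (P N))" using N2 unfolding trie_label_def by auto
    qed
    then show ?thesis unfolding Qh_def using n1 by simp
  qed
  have hQ: "Qh h" unfolding hdef using LeastI[of Qh, OF Qn] .
  have hmin: "\<And>h'. h' < h \<Longrightarrow> \<not> Qh h'" unfolding hdef using not_less_Least by blast
  have h1: "1 \<le> h" and hn: "h \<le> n" and labv: "trie_label P N h (take h (P N)) = {N}"
    using hQ unfolding Qh_def by auto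
  define v0 where "v0 = take h (P N)"
  define c0 where "c0 = take (h - 1) (P N)"
  have hs: "Suc (h - 1) = h" using h1 by simp
  have noother: "\<And>i. i \<in> {1..N} \<Longrightarrow> take h (P i) = v0 \<Longrightarrow> i = N"
    using labv unfolding v0_def trie_label_def by blast
  have other: "\<exists>i\<in>{1..N-1}. take (h - 1) (P i) = c0"
  proof (cases "h = 1")
    case True
    then show ?thesis using N2 c0_def by (intro bexI[of _ 1]) auto
  next
    case False
    then have "\<not> Qh (h - 1)" using hmin h1 by simp
    then have ne: "trie_label P N (h-1) c0 \<noteq> {N}" unfolding Qh_def c0_def using False h1 hn by auto
    have "N \<in> trie_label P N (h-1) c0" unfolding trie_label_def c0_def using N2 by auto
    then obtain i where "i \<in> trie_label P N (h-1) c0" "i \<noteq> N" using ne by blast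
    then show ?thesis unfolding trie_label_def by auto
  qed
  have bt: "\<And>i. i \<in> {1..N} \<Longrightarrow> butlast (take h (P i)) = take (h - 1) (P i)"
    using lenP hn by (simp add: butlast_take)
  have child_iff: "\<And>c. c \<in> trie_children P N (h - 1) c0 \<longleftrightarrow> (\<exists>i\<in>{1..N}. c = take h (P i) \<and> take (h - 1) (P i) = c0)"
    unfolding trie_children_def trie_nodes_def hs using bt by auto
  have key_def: "\<And>c. trie_key P N (Suc (h - 1)) c = Min (trie_label P N h c)"
    unfolding trie_key_def hs by simp
  have finlab: "\<And>c. finite (trie_label P N h c)" unfolding trie_label_def by simp
  have keymem: "\<And>i. i \<in> {1..N} \<Longrightarrow> Min (trie_label P N h (take h (P i))) \<in> trie_label P N h (take h (P i))"
    using finlab by (intro Min_in) (auto simp: trie_label_def)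
  have keyv: "Min (trie_label P N h v0) = N" using labv v0_def by simp
  have v0c: "v0 \<in> trie_children P N (h - 1) c0"
  proof -
    have NN: "N \<in> {1..N}" using N2 by simp
    show ?thesis using child_iff[of v0] NN v0_def c0_def by blast
  qed
  have keylt: "\<And>c. c \<in> trie_children P N (h - 1) c0 \<Longrightarrow> c \<noteq> v0 \<Longrightarrow> Min (trie_label P N h c) < N"
  proof -
    fix c assume c: "c \<in> trie_children P N (h - 1) c0" "c \<noteq> v0"
    then obtain i where i: "i \<in> {1..N}" "c = take h (P i)" unfolding child_iff by blast
    have m: "Min (trie_label P N h c) \<in> trie_label P N h c" using keymem i by simp
    then have "Min (trie_label P N h c) \<le> N" unfolding trie_label_def by auto
    moreover have "Min (trie_label P N h c) \<noteq> N"
    proof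
      assume "Min (trie_label P N h c) = N"
      then have "take h (P N) = c" using m unfolding trie_label_def by auto
      then show False using c v0_def by simp
    qed
    ultimately show "Min (trie_label P N h c) < N" by simp
  qed
  obtain i0 where i0: "i0 \<in> {1..N-1}" "take (h - 1) (P i0) = c0" using other by blast
  have i0N: "i0 \<in> {1..N}" using i0 by auto
  have c1: "take h (P i0) \<in> trie_children P N (h - 1) c0" unfolding child_iff using i0 i0N by blast
  have c2: "take h (P i0) \<noteq> v0" using noother[OF i0N] i0 by auto
  have part1: "\<exists>c \<in> trie_children P N (h - 1) c0. c \<noteq> v0" using c1 c2 by blast
  have Xne: "P ` {1..N - 1} \<noteq> {}" using N2 by auto
  have finX: "finite (P ` {1..N - 1})" by simp
  note sp = sigma_props[OF n1 finX Xne, where p="P N"]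
  have part2: "h = sigma_val n (P N) (P ` {1..N - 1})"
  proof (rule antisym)
    show "h \<le> sigma_val n (P N) (P ` {1..N - 1})"
    proof -
      have ex: "\<exists>q\<in>P ` {1..N - 1}. take (h - 1) q = take (h - 1) (P N)" using i0 c0_def by blast
      have "h \<in> {1..n}" using h1 hn by simp
      then show ?thesis using sp(4) ex by blast
    qed
  next
    show "sigma_val n (P N) (P ` {1..N - 1}) \<le> h"
    proof (rule ccontr)
      let ?s = "sigma_val n (P N) (P ` {1..N - 1})"
      assume "\<not> ?s \<le> h"
      obtain q where q: "q \<in> P ` {1..N - 1}" "take (?s - 1) q = take (?s - 1) (P N)" using sp(3) by auto
      obtain i where i: "i \<in> {1..N-1}" "q = P i" using q(1) by auto
      have mm: "min h (?s - 1) = h" using \<open>\<not> ?s \<le> h\<close> by simp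
      from q(2) have "take h (take (?s - 1) q) = take h (take (?s - 1) (P N))" by simp
      then have "take h (P i) = v0" using mm i v0_def by (simp add: take_take)
      then have "i = N" using noother i by auto
      then show False using i N2 by auto
    qed
  qed
  define C' where "C' = trie_children P N (h - 1) c0 - {v0}"
  have finC: "finite C'" unfolding C'_def trie_children_def trie_nodes_def by simp
  have neC: "C' \<noteq> {}" using part1 C'_def by blast
  define mk where "mk = Max ((\<lambda>c. Min (trie_label P N h c)) ` C')"
  have "mk \<in> (\<lambda>c. Min (trie_label P N h c)) ` C'" unfolding mk_def using finC neC by (intro Max_in) auto
  then obtain w where w: "w \<in> C'" "Min (trie_label P N h w) = mk" by auto
  have wmax: "\<And>u. u \<in> C' \<Longrightarrow> Min (trie_label P N h u) \<le> mk" unfolding mk_def using finC by (intro Max_ge) auto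
  have neigh_iff: "\<And>w. trie_left_neighbor P N (h - 1) c0 w v0 \<longleftrightarrow>
      w \<in> trie_children P N (h - 1) c0 \<and> Min (trie_label P N h w) < N \<and>
      \<not> (\<exists>u \<in> trie_children P N (h - 1) c0. Min (trie_label P N h w) < Min (trie_label P N h u) \<and> Min (trie_label P N h u) < N)"
    unfolding trie_left_neighbor_def key_def keyv using v0c by simp
  have part3: "trie_left_neighbor P N (h - 1) c0 w v0"
    unfolding neigh_iff
  proof (intro conjI)
    show "w \<in> trie_children P N (h - 1) c0" using w C'_def by simp
    show "Min (trie_label P N h w) < N" using keylt w(1) C'_def by blast
    show "\<not> (\<exists>u \<in> trie_children P N (h - 1) c0. Min (trie_label P N h w) < Min (trie_label P N h u) \<and> Min (trie_label P N h u) < N)"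
    proof
      assume "\<exists>u \<in> trie_children P N (h - 1) c0. Min (trie_label P N h w) < Min (trie_label P N h u) \<and> Min (trie_label P N h u) < N"
      then obtain u where u: "u \<in> trie_children P N (h - 1) c0" "Min (trie_label P N h w) < Min (trie_label P N h u)" "Min (trie_label P N h u) < N" by blast
      have "u \<noteq> v0" using u(3) keyv by auto
      then have "u \<in> C'" using u(1) C'_def by simp
      then show False using wmax u(2) w(2) by fastforce
    qed
  qed
  define Q where "Q = map P [1..<N]"
  have lQ: "length Q = N - 1" unfolding Q_def by simp
  have QP: "\<And>m. m \<in> {1..N-1} \<Longrightarrow> Q ! (m - 1) = P m" unfolding Q_def using N2 by auto
  have dQ: "distinct Q" unfolding Q_def using injP
    by (simp add: distinct_map) (rule inj_on_subset[OF injP], auto)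
  have lenQ: "\<forall>x\<in>set Q. length x = n" unfolding Q_def using lenP by auto
  have Fz: "\<And>m. m \<in> {1..N-1} \<Longrightarrow> (\<forall>j\<in>{h + 1..n}. cm n Q ! (m - 1) ! (j - 1) = 0) \<longleftrightarrow>
       (\<forall>k\<in>{1..N}. take h (P k) = take h (P m) \<longrightarrow> m \<le> k)"
  proof -
    fix m assume m: "m \<in> {1..N-1}"
    have mi: "m - 1 < length Q" using m lQ by auto
    have F: "(\<forall>j. h<j \<and> j\<le>n \<longrightarrow> cm n Q ! (m - 1) ! (j-1) = 0) \<longleftrightarrow> (\<forall>k<m - 1. take h (Q!k) \<noteq> take h (Q!(m - 1)))"
      using cm_F[OF dQ lenQ n1 mi hn] .
    have A: "(\<forall>j\<in>{h + 1..n}. cm n Q ! (m - 1) ! (j - 1) = 0) \<longleftrightarrow> (\<forall>j. h<j \<and> j\<le>n \<longrightarrow> cm n Q ! (m - 1) ! (j-1) = 0)"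
      by auto
    have B: "(\<forall>k<m - 1. take h (Q!k) \<noteq> take h (Q!(m - 1))) \<longleftrightarrow> (\<forall>k\<in>{1..N}. take h (P k) = take h (P m) \<longrightarrow> m \<le> k)"
    proof
      assume H: "\<forall>k<m - 1. take h (Q!k) \<noteq> take h (Q!(m - 1))"
      show "\<forall>k\<in>{1..N}. take h (P k) = take h (P m) \<longrightarrow> m \<le> k"
      proof (intro ballI impI)
        fix k assume k: "k \<in> {1..N}" and e: "take h (P k) = take h (P m)"
        show "m \<le> k"
        proof (rule ccontr)
          assume "\<not> m \<le> k"
          then have k1: "k - 1 < m - 1" "k \<in> {1..N-1}" using k m by auto
          then have "take h (Q!(k-1)) \<noteq> take h (Q!(m - 1))" using H by blast
          then show False using QP[OF k1(2)] QP[OF m] e by simp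
        qed
      qed
    next
      assume H: "\<forall>k\<in>{1..N}. take h (P k) = take h (P m) \<longrightarrow> m \<le> k"
      show "\<forall>k<m - 1. take h (Q!k) \<noteq> take h (Q!(m - 1))"
      proof (intro allI impI notI)
        fix k assume k: "k < m - 1" and e: "take h (Q!k) = take h (Q!(m - 1))"
        have k1: "Suc k \<in> {1..N-1}" using k m by auto
        have "Q ! k = P (Suc k)" using QP[OF k1] by simp
        then have "take h (P (Suc k)) = take h (P m)" using e QP[OF m] by simp
        then have "m \<le> Suc k" using H k1 by auto
        then show False using k by simp
      qed
    qed
    show "(\<forall>j\<in>{h + 1..n}. cm n Q ! (m - 1) ! (j - 1) = 0) \<longleftrightarrow>
       (\<forall>k\<in>{1..N}. take h (P k) = take h (P m) \<longrightarrow> m \<le> k)" using A F B by simp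
  qed
  have part4: "\<forall>w. trie_left_neighbor P N (h - 1) c0 w v0 \<longrightarrow>
         (let i\<^sub>1 = Min (trie_label P N h w);
              Phi = cm n Q
          in i\<^sub>1 \<in> {1..N - 1} \<and> take (h - 1) (P i\<^sub>1) = c0
             \<and> (\<forall>j \<in> {h + 1..n}. Phi ! (i\<^sub>1 - 1) ! (j - 1) = 0)
             \<and> (\<forall>m \<in> {1..N - 1}. take (h - 1) (P m) = c0
                   \<and> (\<forall>j \<in> {h + 1..n}. Phi ! (m - 1) ! (j - 1) = 0) \<longrightarrow> m \<le> i\<^sub>1))"
  proof (intro allI impI)
    fix w assume nb: "trie_left_neighbor P N (h - 1) c0 w v0"
    define i1 where "i1 = Min (trie_label P N h w)"
    have wc: "w \<in> trie_children P N (h - 1) c0" and i1N: "i1 < N"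
      and nomid: "\<not> (\<exists>u \<in> trie_children P N (h - 1) c0. i1 < Min (trie_label P N h u) \<and> Min (trie_label P N h u) < N)"
      using nb unfolding neigh_iff i1_def by auto
    obtain i where i: "i \<in> {1..N}" "w = take h (P i)" "take (h - 1) (P i) = c0" using wc unfolding child_iff by blast
    have i1mem: "i1 \<in> trie_label P N h w" unfolding i1_def using keymem[OF i(1)] i(2) by simp
    then have i1r: "i1 \<in> {1..N}" "take h (P i1) = w" unfolding trie_label_def by auto
    have i1R: "i1 \<in> {1..N-1}" using i1r i1N by auto
    have i1c: "take (h - 1) (P i1) = c0" using bt[OF i1r(1)] bt[OF i(1)] i1r(2) i by simp
    have i1min: "\<forall>k\<in>{1..N}. take h (P k) = take h (P i1) \<longrightarrow> i1 \<le> k"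
    proof (intro ballI impI)
      fix k assume k: "k \<in> {1..N}" "take h (P k) = take h (P i1)"
      then have "k \<in> trie_label P N h w" using i1r(2) unfolding trie_label_def by simp
      then show "i1 \<le> k" unfolding i1_def using Min_le[OF finlab] by blast
    qed
    have z1: "\<forall>j \<in> {h + 1..n}. cm n Q ! (i1 - 1) ! (j - 1) = 0" using Fz[OF i1R] i1min by blast
    have mx: "\<forall>m \<in> {1..N - 1}. take (h - 1) (P m) = c0
                   \<and> (\<forall>j \<in> {h + 1..n}. cm n Q ! (m - 1) ! (j - 1) = 0) \<longrightarrow> m \<le> i1"
    proof (intro ballI impI)
      fix m assume m: "m \<in> {1..N-1}" and H: "take (h - 1) (P m) = c0
                   \<and> (\<forall>j \<in> {h + 1..n}. cm n Q ! (m - 1) ! (j - 1) = 0)"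
      have mN: "m \<in> {1..N}" using m by auto
      have mm: "\<forall>k\<in>{1..N}. take h (P k) = take h (P m) \<longrightarrow> m \<le> k" using Fz[OF m] H by blast
      have km: "Min (trie_label P N h (take h (P m))) = m"
        using mm mN finlab by (intro Min_eqI) (auto simp: trie_label_def)
      have uc: "take h (P m) \<in> trie_children P N (h - 1) c0" unfolding child_iff using mN H by blast
      show "m \<le> i1"
      proof (rule ccontr)
        assume "\<not> m \<le> i1"
        then have "i1 < m" by simp
        moreover have "m < N" using m by auto
        ultimately show False using nomid uc km by auto
      qed
    qed
    show "let i\<^sub>1 = Min (trie_label P N h w);
              Phi = cm n Q
          in i\<^sub>1 \<in> {1..N - 1} \<and> take (h - 1) (P i\<^sub>1) = c0
             \<and> (\<forall>j \<in> {h + 1..n}. Phi ! (i\<^sub>1 - 1) ! (j - 1) = 0)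
             \<and> (\<forall>m \<in> {1..N - 1}. take (h - 1) (P m) = c0
                   \<and> (\<forall>j \<in> {h + 1..n}. Phi ! (m - 1) ! (j - 1) = 0) \<longrightarrow> m \<le> i\<^sub>1)"
      unfolding Let_def i1_def[symmetric] using i1R i1c z1 mx by blast
  qed
  show ?thesis
    using part1 part2 part3 part4 unfolding v0_def c0_def Q_def by blast
qed

end
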